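(* Let $A,B\in M_n(\mathbb{R}_+)$ and let $C=[A,B]_\oplus = AB\oplus BA$. Suppose $AC=0$ and $BC=0$. Then for every index $t\in\{1,\dots,n\}$: (a) if $a_{it}>0$ for some $i$ (i.e. the $t$-th column of $A$ is nonzero), then the $t$-th row of $C$ is identically $0$; (b) if $b_{it}>0$ for some $i$ (i.e. the $t$-th column of $B$ is nonzero), then the $t$-th row of $C$ is identically $0$.
   Context: Max algebra: $\mathbb{R}_+$ the nonnegative reals with $a\oplus b=\max\{a,b\}$ and ordinary multiplication; for $A,B\in M_n(\mathbb{R}_+)$, $(AB)_{ij}=\max_k a_{ik}b_{kj}$ and $(A\oplus B)_{ij}=\max\{a_{ij},b_{ij}\}$. *)

theory Defs
  imports "HOL-Analysis.Analysis"
begin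

definition maxmult :: "real^'n^'n \<Rightarrow> real^'n^'n \<Rightarrow> real^'n^'n" (infixl "\<otimes>\<^sub>m" 70) where
  "A \<otimes>\<^sub>m B = (\<chi> i j. Max ((\<lambda>k. A $ i $ k * B $ k $ j) ` UNIV))"

definition maxplus :: "real^'n^'n \<Rightarrow> real^'n^'n \<Rightarrow> real^'n^'n" (infixl "\<oplus>\<^sub>m" 65) where
  "A \<oplus>\<^sub>m B = (\<chi> i j. max (A $ i $ j) (B $ i $ j))"

definition nonneg_mat :: "real^'n^'n \<Rightarrow> bool" where
  "nonneg_mat A \<longleftrightarrow> (\<forall>i j. 0 \<le> A $ i $ j)"

definition max_comm :: "real^'n^'n \<Rightarrow> real^'n^'n \<Rightarrow> real^'n^'n" where
  "max_comm A B = (A \<otimes>\<^sub>m B) \<oplus>\<^sub>m (B \<otimes>\<^sub>m A)"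

end

theory Submission
  imports Defs
begin

lemma mm_ge: "(X \<otimes>\<^sub>m Y) $ i $ j \<ge> X $ i $ k * Y $ k $ j"
  unfolding maxmult_def by (auto intro: Max_ge)

lemma C_nonneg:
  assumes "nonneg_mat A" "nonneg_mat B"
  shows "max_comm A B $ i $ j \<ge> 0"
proof -
  have "(A \<otimes>\<^sub>m B) $ i $ j \<ge> A $ i $ i * B $ i $ j" by (rule mm_ge)
  moreover have "A $ i $ i * B $ i $ j \<ge> 0"
    using assms unfolding nonneg_mat_def by simp
  ultimately show ?thesis unfolding max_comm_def maxplus_def by simp
qed

lemma key:
  assumes "nonneg_mat A" "nonneg_mat B" "X \<otimes>\<^sub>m max_comm A B = 0" "X $ i $ t > 0"
  shows "max_comm A B $ t $ j = 0"
proof -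
  have "X $ i $ t * max_comm A B $ t $ j \<le> 0"
    using mm_ge[where X=X and Y="max_comm A B" and i=i and j=j and k=t] assms(3) by simp
  moreover have "max_comm A B $ t $ j \<ge> 0" using C_nonneg assms by blast
  ultimately show ?thesis using assms(4)
    by (metis antisym mult_le_0_iff not_less)
qed

theorem lemma3p7:
  fixes A B :: "real^'n^'n"
  assumes "nonneg_mat A" and "nonneg_mat B"
    and "A \<otimes>\<^sub>m max_comm A B = 0" and "B \<otimes>\<^sub>m max_comm A B = 0"
  shows "\<forall>t. ((\<exists>i. A $ i $ t > 0) \<longrightarrow> (\<forall>j. max_comm A B $ t $ j = 0))
            \<and> ((\<exists>i. B $ i $ t > 0) \<longrightarrow> (\<forall>j. max_comm A B $ t $ j = 0))"
  using key[OF assms(1,2,3)] key[OF assms(1,2,4)] by blast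

end
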